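(* Let $\mathcal{X} = \mathbb{N}$ and $\mathcal{Y} = \{0,1\} \times \{0,1\}^*$. For $d \in \mathbb{N}$ and binary strings $A, B \in \{0,1\}^d$, define $h_{A,B} \colon \mathcal{X} \to \mathcal{Y}$ by \[ h_{A,B}(x) = \begin{cases} (0, A) & \text{if } (A \oplus B)(x \bmod d) = 0, \\ (1, B) & \text{if } (A \oplus B)(x \bmod d) = 1, \end{cases} \] and let \[ \mathcal{H}_{\mathrm{OTP}} = \big\{ h_{A,B} : A, B \in \{0,1\}^*,\ |A| = |B|,\ A \oplus B \text{ is balanced} \big\}. \] Then $\mathcal{H}_{\mathrm{OTP}}$ is a learnable hypothesis class (in both the transductive and PAC models), but there is no local regularizer for $\mathcal{H}_{\mathrm{OTP}}$ that transductively learns $\mathcal{H}_{\mathrm{OTP}}$.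
   Context: $\{0,1\}^*$ is the set of finite binary strings; $A \oplus B$ is the entrywise XOR of equal-length strings, and $(A\oplus B)(i)$ its $i$th entry, with positions of a length-$d$ string indexed by residues modulo $d$. A string is balanced if it has equally many $0$ entries and $1$ entries. Learning setting: a training set is a finite sequence $S=((x_i,y_i))_{i} \in (\mathcal{X}\times\mathcal{Y})^*$; a learner is a map $\mathcal{A}$ from training sets to functions $\mathcal{X}\to\mathcal{Y}$. The empirical risk of $f$ on $S=((x_i,y_i))_{i\in[n]}$ is $L_S(f)=\frac1n\sum_{i}[f(x_i)\neq y_i]$. For a class $\mathcal{H}\subseteq \mathcal{Y}^{\mathcal{X}}$, unlabeled points $S=(x_i)_{i\in[n]}\in\mathcal{X}^n$ and $h^*\in\mathcal{H}$, the transductive error of $\mathcal{A}$ is $L^{\mathrm{Trans}}_{S,h^*}(\mathcal{A}) = \frac1n\sum_{i\in[n]} [\mathcal{A}(S_{-i},h^* )(x_i)\neq h^*(x_i)]$, where $\mathcal{A}(S_{-i},h^* )$ is the output of $\mathcal{A}$ on the training set $((x_j,h^*(x_j)))_{j\neq i}$. $\mathcal{A}$ is a transductive learner for $\mathcal{H}$ (and $\mathcal{H}$ is transductively learnable) if there is $m:(0,1)\to\mathbb{N}$ such that for all $\epsilon\in(0,1)$, $h^*\in\mathcal{H}$ and $S\in\mathcal{X}^*$ with $|S|\ge m(\epsilon)$, $L^{\mathrm{Trans}}_{S,h^*}(\mathcal{A})\le\epsilon$. PAC learnability: there exist a learner $\mathcal{A}$ and $m:(0,1)^2\to\mathbb{N}$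 such that for every distribution $\mathcal{D}$ on $\mathcal{X}\times\mathcal{Y}$ with some $h\in\mathcal{H}$ satisfying $\Pr_{(x,y)\sim\mathcal{D}}[h(x)\ne y]=0$, and all $\epsilon,\delta\in(0,1)$, a sample $S\sim\mathcal{D}^n$ with $n\ge m(\epsilon,\delta)$ satisfies $\Pr_{(x,y)\sim\mathcal{D}}[\mathcal{A}(S)(x)\neq y]\le\epsilon$ with probability at least $1-\delta$. A local regularizer for $\mathcal{H}$ is a function $\psi:\mathcal{H}\times\mathcal{X}\to\mathbb{R}_{\ge 0}$. A learner $\mathcal{A}$ is induced by $\psi$ if for every training set $S$ and every $x\in\mathcal{X}$, $\mathcal{A}(S)(x)\in\{h(x): h\in\arg\min_{h\in\mathcal{H},\,L_S(h)=0}\psi(h,x)\}$. $\psi$ transductively learns $\mathcal{H}$ if every learner induced by $\psi$ is a transductive learner for $\mathcal{H}$. *)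

theory Defs
  imports "HOL-Probability.Probability"
begin

(* Binary strings are bool lists (True = 1, False = 0). *)

definition xor_str :: "bool list \<Rightarrow> bool list \<Rightarrow> bool list" where
  "xor_str A B = map2 (\<lambda>a b. a \<noteq> b) A B"

definition balanced :: "bool list \<Rightarrow> bool" where
  "balanced s \<longleftrightarrow> length (filter (\<lambda>b. b) s) = length (filter (\<lambda>b. \<not> b) s)"

definition h_AB :: "bool list \<Rightarrow> bool list \<Rightarrow> nat \<Rightarrow> bool \<times> bool list" where
  "h_AB A B x = (if xor_str A B ! (x mod length A) then (True, B) else (False, A))"

definition H_OTP :: "(nat \<Rightarrow> bool \<times> bool list) set" where
  "H_OTP = {h_AB A B | A B. length A = length B \<and> A \<noteq> [] \<and> balanced (xor_str A B)}"

type_synonym ('x, 'y) learner = "('x \<times> 'y) list \<Rightarrow> 'x \<Rightarrow> 'y"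

definition emp_risk :: "('x \<times> 'y) list \<Rightarrow> ('x \<Rightarrow> 'y) \<Rightarrow> real" where
  "emp_risk S f = (\<Sum>i<length S. if f (fst (S ! i)) \<noteq> snd (S ! i) then 1 else 0) / real (length S)"

definition drop_idx :: "'a list \<Rightarrow> nat \<Rightarrow> 'a list" where
  "drop_idx S i = take i S @ drop (Suc i) S"

definition trans_error :: "('x, 'y) learner \<Rightarrow> 'x list \<Rightarrow> ('x \<Rightarrow> 'y) \<Rightarrow> real" where
  "trans_error A S h =
     (\<Sum>i<length S. if A (map (\<lambda>x. (x, h x)) (drop_idx S i)) (S ! i) \<noteq> h (S ! i) then 1 else 0)
       / real (length S)"

definition transductive_learner :: "('x \<Rightarrow> 'y) set \<Rightarrow> ('x, 'y) learner \<Rightarrow> bool" where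
  "transductive_learner H A \<longleftrightarrow>
     (\<exists>m :: real \<Rightarrow> nat. \<forall>\<epsilon>. 0 < \<epsilon> \<and> \<epsilon> < 1 \<longrightarrow>
        (\<forall>h\<in>H. \<forall>S. length S \<ge> m \<epsilon> \<longrightarrow> trans_error A S h \<le> \<epsilon>))"

definition transductively_learnable :: "('x \<Rightarrow> 'y) set \<Rightarrow> bool" where
  "transductively_learnable H \<longleftrightarrow> (\<exists>A. transductive_learner H A)"

(* Distributions on the countable space X \<times> Y are represented as pmfs;
   S ~ D^n is replicate_pmf n D. *)
definition PAC_learnable :: "('x \<Rightarrow> 'y) set \<Rightarrow> bool" where
  "PAC_learnable H \<longleftrightarrow>
     (\<exists>(A :: ('x, 'y) learner) (m :: real \<Rightarrow> real \<Rightarrow> nat).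
       \<forall>D :: ('x \<times> 'y) pmf.
         (\<exists>h\<in>H. measure_pmf.prob D {(x, y). h x \<noteq> y} = 0) \<longrightarrow>
         (\<forall>\<epsilon> \<delta>. 0 < \<epsilon> \<and> \<epsilon> < 1 \<and> 0 < \<delta> \<and> \<delta> < 1 \<longrightarrow>
           (\<forall>n \<ge> m \<epsilon> \<delta>.
              measure_pmf.prob (replicate_pmf n D)
                {S. measure_pmf.prob D {(x, y). A S x \<noteq> y} \<le> \<epsilon>} \<ge> 1 - \<delta>)))"

definition local_regularizer :: "('x \<Rightarrow> 'y) set \<Rightarrow> (('x \<Rightarrow> 'y) \<Rightarrow> 'x \<Rightarrow> real) \<Rightarrow> bool" where
  "local_regularizer H \<psi> \<longleftrightarrow> (\<forall>h\<in>H. \<forall>x. \<psi> h x \<ge> 0)"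

definition reg_argmin :: "('x \<Rightarrow> 'y) set \<Rightarrow> (('x \<Rightarrow> 'y) \<Rightarrow> 'x \<Rightarrow> real) \<Rightarrow> ('x \<times> 'y) list \<Rightarrow> 'x \<Rightarrow> ('x \<Rightarrow> 'y) set" where
  "reg_argmin H \<psi> S x =
     {h \<in> H. emp_risk S h = 0 \<and> (\<forall>h'\<in>H. emp_risk S h' = 0 \<longrightarrow> \<psi> h x \<le> \<psi> h' x)}"

(* Convention: where the arg min is empty the learner is unconstrained. *)
definition induced_by :: "('x \<Rightarrow> 'y) set \<Rightarrow> (('x \<Rightarrow> 'y) \<Rightarrow> 'x \<Rightarrow> real) \<Rightarrow> ('x, 'y) learner \<Rightarrow> bool" where
  "induced_by H \<psi> A \<longleftrightarrow>
     (\<forall>S x. reg_argmin H \<psi> S x \<noteq> {} \<longrightarrow> A S x \<in> (\<lambda>h. h x) ` reg_argmin H \<psi> S x)"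

definition reg_transductively_learns :: "('x \<Rightarrow> 'y) set \<Rightarrow> (('x \<Rightarrow> 'y) \<Rightarrow> 'x \<Rightarrow> real) \<Rightarrow> bool" where
  "reg_transductively_learns H \<psi> \<longleftrightarrow> (\<forall>A. induced_by H \<psi> A \<longrightarrow> transductive_learner H A)"

end

theory Submission
  imports Defs
begin

lemma emeasure_rep_all:
  "emeasure (measure_pmf (replicate_pmf n D)) {xs. \<forall>y\<in>set xs. P y}
     = emeasure (measure_pmf D) {y. P y} ^ n"
proof (induction n)
  case 0
  then show ?case by (simp add: indicator_def)
next
  case (Suc n)
  have "emeasure (measure_pmf (replicate_pmf (Suc n) D)) {xs. \<forall>y\<in>set xs. P y}
     = (\<integral>\<^sup>+x. (\<integral>\<^sup>+xs. indicator {xs. \<forall>y\<in>set xs. P y} (x#xs) \<partial>measure_pmf (replicate_pmf n D)) \<partial>measure_pmf D)"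
    by (simp add: emeasure_bind_pmf)
  also have "\<dots> = (\<integral>\<^sup>+x. indicator {y. P y} x * emeasure (measure_pmf (replicate_pmf n D)) {xs. \<forall>y\<in>set xs. P y} \<partial>measure_pmf D)"
  proof (rule nn_integral_cong)
    fix x
    show "(\<integral>\<^sup>+xs. indicator {xs. \<forall>y\<in>set xs. P y} (x#xs) \<partial>measure_pmf (replicate_pmf n D)) = indicator {y. P y} x * emeasure (measure_pmf (replicate_pmf n D)) {xs. \<forall>y\<in>set xs. P y}"
    proof (cases "P x")
      case True
      have "(\<lambda>xs. indicator {xs. \<forall>y\<in>set xs. P y} (x#xs)) = (indicator {xs. \<forall>y\<in>set xs. P y} :: _ \<Rightarrow> ennreal)"
        using True by (auto simp: indicator_def)
      then show ?thesis using True
        by (simp only:) (simp add: nn_integral_indicator)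
    qed (simp add: indicator_def)
  qed
  also have "\<dots> = emeasure (measure_pmf D) {y. P y} * emeasure (measure_pmf (replicate_pmf n D)) {xs. \<forall>y\<in>set xs. P y}"
    by (simp add: nn_integral_multc)
  finally show ?case using Suc by (simp add: mult.commute)
qed

lemma measure_rep_all:
  "measure_pmf.prob (replicate_pmf n D) {xs. \<forall>y\<in>set xs. P y}
     = measure_pmf.prob D {y. P y} ^ n"
  using emeasure_rep_all[of n D P]
  by (simp add: measure_pmf.emeasure_eq_measure ennreal_power)


lemma H_OTP_E:
  assumes "h \<in> H_OTP"
  obtains A B where "h = h_AB A B" "length A = length B" "A \<noteq> []" "balanced (xor_str A B)"
  using assms unfolding H_OTP_def by blast

lemma h_AB_eq: "h_AB A B y = (fst (h_AB A B y), if fst (h_AB A B y) then B else A)"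
  by (simp add: h_AB_def)

lemma H_same_fst:
  assumes "h \<in> H_OTP" "fst (h y) = fst (h z)" shows "h y = h z"
proof -
  obtain A B where "h = h_AB A B" using assms(1) by (rule H_OTP_E)
  then show ?thesis using assms(2) by (auto simp: h_AB_def split: if_splits)
qed

lemma H_snd_ne:
  assumes "h \<in> H_OTP" shows "snd (h y) \<noteq> []"
proof -
  obtain A B where "h = h_AB A B" "length A = length B" "A \<noteq> []" using assms by (rule H_OTP_E)
  then show ?thesis by (auto simp: h_AB_def)
qed

definition L0 :: "(nat \<times> bool \<times> bool list) list \<Rightarrow> nat \<Rightarrow> bool \<times> bool list" where
  "L0 S x = (if (\<exists>p\<in>set S. fst (snd p)) \<and> (\<exists>p\<in>set S. \<not> fst (snd p))
     then h_AB (snd (snd (hd (filter (\<lambda>p. \<not> fst (snd p)) S)))) (snd (snd (hd (filter (\<lambda>p. fst (snd p)) S)))) x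
     else snd (hd S))"

lemma hd_filter_in: "\<exists>p\<in>set S. P p \<Longrightarrow> hd (filter P S) \<in> set S \<and> P (hd (filter P S))"
proof -
  assume "\<exists>p\<in>set S. P p"
  then have "filter P S \<noteq> []" by (simp add: filter_empty_conv)
  then have "hd (filter P S) \<in> set (filter P S)" by (rule hd_in_set)
  then show ?thesis by (simp only: set_filter mem_Collect_eq)
qed

lemma L0_both:
  assumes h: "h \<in> H_OTP" and lab: "\<forall>p\<in>set S. snd p = h (fst p)"
    and both: "(\<exists>p\<in>set S. fst (snd p)) \<and> (\<exists>p\<in>set S. \<not> fst (snd p))"
  shows "L0 S = h"
proof -
  obtain A B where hAB: "h = h_AB A B" using h by (rule H_OTP_E)
  let ?p0 = "hd (filter (\<lambda>p. \<not> fst (snd p)) S)"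
  let ?p1 = "hd (filter (\<lambda>p. fst (snd p)) S)"
  have p0: "?p0 \<in> set S" "\<not> fst (snd ?p0)" using hd_filter_in[of S "\<lambda>p. \<not> fst (snd p)"] both by auto
  have p1: "?p1 \<in> set S" "fst (snd ?p1)" using hd_filter_in[of S "\<lambda>p. fst (snd p)"] both by auto
  have "snd ?p0 = h_AB A B (fst ?p0)" using p0 lab hAB by auto
  then have "snd (snd ?p0) = A" using p0 by (auto simp: h_AB_def split: if_splits)
  have "snd ?p1 = h_AB A B (fst ?p1)" using p1 lab hAB by auto
  then have "snd (snd ?p1) = B" using p1 by (auto simp: h_AB_def split: if_splits)
  note this \<open>snd (snd ?p0) = A\<close>
  then show ?thesis using both hAB \<open>snd (snd ?p0) = A\<close> by (intro ext) (simp add: L0_def)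
qed

lemma L0_one:
  assumes "\<not> ((\<exists>p\<in>set S. fst (snd p)) \<and> (\<exists>p\<in>set S. \<not> fst (snd p)))" "S \<noteq> []"
  shows "L0 S x = snd (hd S)" "\<forall>p\<in>set S. fst (snd p) = fst (snd (hd S))"
proof -
  show "L0 S x = snd (hd S)" using assms(1) unfolding L0_def by (simp only: if_False)
  have hd: "hd S \<in> set S" using assms(2) by simp
  show "\<forall>p\<in>set S. fst (snd p) = fst (snd (hd S))"
  proof
    fix p assume p: "p \<in> set S"
    show "fst (snd p) = fst (snd (hd S))"
      using assms(1) p hd by blast
  qed
qed

lemma L0_correct:
  assumes h: "h \<in> H_OTP" and lab: "\<forall>p\<in>set S. snd p = h (fst p)"
    and q: "q \<in> set S" and fx: "fst (h x) = fst (h (fst q))"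
  shows "L0 S x = h x"
proof (cases "(\<exists>p\<in>set S. fst (snd p)) \<and> (\<exists>p\<in>set S. \<not> fst (snd p))")
  case True
  then show ?thesis using L0_both[OF h lab] by simp
next
  case False
  have ne: "S \<noteq> []" using q by auto
  have "hd S \<in> set S" using ne by simp
  then have "snd (hd S) = h (fst (hd S))" using lab by auto
  moreover have "fst (h (fst (hd S))) = fst (h (fst q))"
    using L0_one(2)[OF False ne] q lab \<open>hd S \<in> set S\<close> by metis
  ultimately have "h (fst (hd S)) = h x" using H_same_fst[OF h] fx by metis
  then show ?thesis using L0_one(1)[OF False ne] \<open>snd (hd S) = h (fst (hd S))\<close> by simp
qed

lemma in_drop_idx: "j < length S \<Longrightarrow> j \<noteq> i \<Longrightarrow> S ! j \<in> set (drop_idx S i)"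
proof (cases "j < i")
  case True
  assume "j < length S"
  then have "take i S ! j = S ! j" "j < length (take i S)" using True by auto
  then show ?thesis unfolding drop_idx_def by (metis Un_iff nth_mem set_append)
next
  case False
  assume "j < length S" "j \<noteq> i"
  then have "j > i" using False by auto
  then have "drop (Suc i) S ! (j - Suc i) = S ! j" "j - Suc i < length (drop (Suc i) S)"
    using \<open>j < length S\<close> by auto
  then show ?thesis unfolding drop_idx_def by (metis Un_iff nth_mem set_append)
qed

lemma trans_error_L0:
  assumes h: "h \<in> H_OTP" and n: "length S > 0"
  shows "trans_error L0 S h \<le> 2 / real (length S)"
proof -
  let ?n = "length S"
  let ?U = "{i. (\<forall>j<?n. j \<noteq> i \<longrightarrow> fst (h (S!j)) \<noteq> fst (h (S!i)))}"
  have err: "L0 (map (\<lambda>x. (x, h x)) (drop_idx S i)) (S ! i) = h (S ! i)"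
    if "i < ?n" "i \<notin> ?U" for i
  proof -
    have "\<not> (\<forall>j<?n. j \<noteq> i \<longrightarrow> fst (h (S!j)) \<noteq> fst (h (S!i)))" using that by blast
    then obtain j where j: "j < ?n" "j \<noteq> i" "fst (h (S!j)) = fst (h (S!i))" by blast
    show ?thesis
      by (rule L0_correct[OF h, where q = "(S!j, h (S!j))"]) (use in_drop_idx[OF j(1,2)] j(3) in auto)
  qed
  have "(\<Sum>i<?n. if L0 (map (\<lambda>x. (x, h x)) (drop_idx S i)) (S ! i) \<noteq> h (S ! i) then 1 else 0)
      \<le> (\<Sum>i<?n. if i \<in> ?U then 1 else (0::real))"
    by (rule sum_mono) (use err in auto)
  also have "\<dots> = real (card ({..<?n} \<inter> ?U))"
    by (simp add: sum.If_cases)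
  also have "\<dots> \<le> 2"
  proof -
    have "inj_on (\<lambda>i. fst (h (S!i))) ({..<?n} \<inter> ?U)" by (auto simp: inj_on_def)
    then have "card ({..<?n} \<inter> ?U) \<le> card (UNIV :: bool set)"
      by (rule card_inj_on_le) auto
    then show ?thesis by simp
  qed
  finally have "(\<Sum>i<?n. if L0 (map (\<lambda>x. (x, h x)) (drop_idx S i)) (S ! i) \<noteq> h (S ! i) then 1 else 0) \<le> (2::real)" .
  then show ?thesis unfolding trans_error_def using n by (intro divide_right_mono) auto
qed

lemma part1: "transductively_learnable H_OTP"
  unfolding transductively_learnable_def transductive_learner_def
proof (intro exI[of _ L0] exI[of _ "\<lambda>\<epsilon>. nat \<lceil>2 / \<epsilon>\<rceil> + 1"] allI impI ballI)
  fix \<epsilon> :: real and h and S :: "nat list"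
  assume e: "0 < \<epsilon> \<and> \<epsilon> < 1" and h: "h \<in> H_OTP" and len: "nat \<lceil>2 / \<epsilon>\<rceil> + 1 \<le> length S"
  then have n: "length S > 0" by auto
  have "2 / \<epsilon> \<le> real (length S)" using len by linarith
  then have "2 / real (length S) \<le> \<epsilon>" using e n by (simp add: field_simps)
  then show "trans_error L0 S h \<le> \<epsilon>" using trans_error_L0[OF h n] by linarith
qed



lemma prob_compl_pmf: "measure_pmf.prob D {p. Q p} = 1 - measure_pmf.prob D {p. \<not> Q p}"
proof -
  have "measure_pmf.prob D (space (measure_pmf D) - {p. \<not> Q p}) = 1 - measure_pmf.prob D {p. \<not> Q p}"
    by (rule measure_pmf.prob_compl) simp
  moreover have "space (measure_pmf D) - {p. \<not> Q p} = {p. Q p}" by auto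
  ultimately show ?thesis by simp
qed

lemma part2: "PAC_learnable H_OTP"
  unfolding PAC_learnable_def
proof (intro exI[of _ L0] exI[of _ "\<lambda>\<epsilon> \<delta>. SOME N. (1 - \<epsilon>) ^ N < \<delta> / 2"] allI impI)
  fix D :: "(nat \<times> bool \<times> bool list) pmf" and \<epsilon> \<delta> :: real and n :: nat
  assume "\<exists>h\<in>H_OTP. measure_pmf.prob D {(x, y). h x \<noteq> y} = 0"
  then obtain h where h: "h \<in> H_OTP" and h0: "measure_pmf.prob D {(x, y). h x \<noteq> y} = 0" by blast
  assume ed: "0 < \<epsilon> \<and> \<epsilon> < 1 \<and> 0 < \<delta> \<and> \<delta> < 1"
  assume nN: "(SOME N. (1 - \<epsilon>) ^ N < \<delta> / 2) \<le> n"
  have supp: "snd p = h (fst p)" if "p \<in> set_pmf D" for p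
    using h0 that unfolding measure_pmf_zero_iff by (cases p) auto
  have "\<exists>N. (1 - \<epsilon>) ^ N < \<delta> / 2" by (rule real_arch_pow_inv) (use ed in auto)
  then have "(1 - \<epsilon>) ^ (SOME N. (1 - \<epsilon>) ^ N < \<delta> / 2) < \<delta> / 2" by (rule someI_ex)
  moreover have "(1 - \<epsilon>) ^ n \<le> (1 - \<epsilon>) ^ (SOME N. (1 - \<epsilon>) ^ N < \<delta> / 2)"
    by (rule power_decreasing) (use nN ed in auto)
  ultimately have pn: "(1 - \<epsilon>) ^ n < \<delta> / 2" by linarith
  have npos: "n > 0"
  proof (rule ccontr)
    assume "\<not> n > 0" then have "n = 0" by simp
    then show False using pn ed by simp
  qed
  define Good where "Good = {S. measure_pmf.prob D {(x, y). L0 S x \<noteq> y} \<le> \<epsilon>}"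
  define Bad where "Bad t = (if measure_pmf.prob D {p. fst (snd p) \<noteq> t} > \<epsilon>
       then {S :: (nat \<times> bool \<times> bool list) list. \<forall>p\<in>set S. fst (snd p) = t} else {})" for t
  have sub: "-Good \<inter> set_pmf (replicate_pmf n D) \<subseteq> Bad True \<union> Bad False"
  proof
    fix S assume S: "S \<in> -Good \<inter> set_pmf (replicate_pmf n D)"
    then have len: "length S = n" and sS: "set S \<subseteq> set_pmf D"
      by (auto simp: set_replicate_pmf)
    have lab: "\<forall>p\<in>set S. snd p = h (fst p)" using sS supp by auto
    have ng: "\<not> measure_pmf.prob D {(x, y). L0 S x \<noteq> y} \<le> \<epsilon>" using S by (simp add: Good_def)
    have ne: "S \<noteq> []" using len npos by auto
    show "S \<in> Bad True \<union> Bad False"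
    proof (cases "(\<exists>p\<in>set S. fst (snd p)) \<and> (\<exists>p\<in>set S. \<not> fst (snd p))")
      case True
      then have "L0 S = h" by (rule L0_both[OF h lab])
      then show ?thesis using ng h0 ed by simp
    next
      case False
      define t where "t = fst (snd (hd S))"
      have allt: "\<forall>p\<in>set S. fst (snd p) = t" using L0_one(2)[OF False ne] t_def by simp
      have hdS: "hd S \<in> set S" using ne by simp
      have "measure_pmf.prob D {(x, y). L0 S x \<noteq> y}
          = measure_pmf.prob D ({(x, y). L0 S x \<noteq> y} \<inter> set_pmf D)"
        by (rule measure_Int_set_pmf[symmetric])
      also have "\<dots> \<le> measure_pmf.prob D {p. fst (snd p) \<noteq> t}"
      proof (rule measure_pmf.finite_measure_mono)
        show "{(x, y). L0 S x \<noteq> y} \<inter> set_pmf D \<subseteq> {p. fst (snd p) \<noteq> t}"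
        proof
          fix p assume p: "p \<in> {(x, y). L0 S x \<noteq> y} \<inter> set_pmf D"
          then have sp: "snd p = h (fst p)" using supp by auto
          have l: "L0 S (fst p) = h (fst (hd S))" using L0_one(1)[OF False ne] lab hdS by auto
          show "p \<in> {p. fst (snd p) \<noteq> t}"
          proof (rule ccontr)
            assume "p \<notin> {p. fst (snd p) \<noteq> t}"
            then have "fst (h (fst p)) = fst (h (fst (hd S)))" using sp lab hdS t_def by auto
            then have "h (fst p) = h (fst (hd S))" by (rule H_same_fst[OF h])
            then show False using p sp l by (cases p) auto
          qed
        qed
      qed simp
      finally have "measure_pmf.prob D {p. fst (snd p) \<noteq> t} > \<epsilon>" using ng by linarith
      then have "S \<in> Bad t" using allt by (simp add: Bad_def)
      then show ?thesis by (cases t) auto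
    qed
  qed
  have pb: "measure_pmf.prob (replicate_pmf n D) (Bad t) \<le> (1 - \<epsilon>) ^ n" for t
  proof (cases "measure_pmf.prob D {p. fst (snd p) \<noteq> t} > \<epsilon>")
    case True
    have "measure_pmf.prob (replicate_pmf n D) (Bad t) = measure_pmf.prob D {p. fst (snd p) = t} ^ n"
      using True measure_rep_all[of n D "\<lambda>p. fst (snd p) = t"] by (simp add: Bad_def)
    also have "\<dots> \<le> (1 - \<epsilon>) ^ n"
    proof (rule power_mono)
      show "measure_pmf.prob D {p. fst (snd p) = t} \<le> 1 - \<epsilon>"
        using prob_compl_pmf[of D "\<lambda>p. fst (snd p) = t"] True by simp
    qed simp
    finally show ?thesis .
  next
    case False
    then show ?thesis using ed by (simp add: Bad_def)
  qed
  have "measure_pmf.prob (replicate_pmf n D) (-Good)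
      = measure_pmf.prob (replicate_pmf n D) (-Good \<inter> set_pmf (replicate_pmf n D))"
    by (rule measure_Int_set_pmf[symmetric])
  also have "\<dots> \<le> measure_pmf.prob (replicate_pmf n D) (Bad True \<union> Bad False)"
    by (rule measure_pmf.finite_measure_mono[OF sub]) simp
  also have "\<dots> \<le> measure_pmf.prob (replicate_pmf n D) (Bad True) + measure_pmf.prob (replicate_pmf n D) (Bad False)"
    by (rule measure_Un_le) simp_all
  also have "\<dots> \<le> \<delta>" using pb[of True] pb[of False] pn by linarith
  finally have "measure_pmf.prob (replicate_pmf n D) (-Good) \<le> \<delta>" .
  moreover have "measure_pmf.prob (replicate_pmf n D) Good = 1 - measure_pmf.prob (replicate_pmf n D) (-Good)"
    using prob_compl_pmf[of "replicate_pmf n D" "\<lambda>S. S \<in> Good"] by (simp add: Compl_eq)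
  ultimately show "1 - \<delta> \<le> measure_pmf.prob (replicate_pmf n D) {S. measure_pmf.prob D {(x, y). L0 S x \<noteq> y} \<le> \<epsilon>}"
    unfolding Good_def by simp
qed



definition Aof :: "bool list \<Rightarrow> bool list" where "Aof a = concat (map (\<lambda>x. [x, x]) a)"
definition Bof :: "bool list \<Rightarrow> bool list" where "Bof b = concat (map (\<lambda>y. [y, \<not> y]) b)"
definition hN :: "bool list \<Rightarrow> bool list \<Rightarrow> nat \<Rightarrow> bool \<times> bool list" where
  "hN a b = h_AB (Aof a) (Bof b)"
definition Cv :: "bool list \<Rightarrow> bool list \<Rightarrow> nat \<Rightarrow> bool" where
  "Cv a b p = (if even p then a ! (p div 2) \<noteq> b ! (p div 2) else a ! (p div 2) = b ! (p div 2))"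

lemma length_Aof[simp]: "length (Aof a) = 2 * length a"
  by (induction a) (auto simp: Aof_def)
lemma length_Bof[simp]: "length (Bof b) = 2 * length b"
  by (induction b) (auto simp: Bof_def)

lemma nth_Aof: "j < 2 * length a \<Longrightarrow> Aof a ! j = a ! (j div 2)"
proof (induction a arbitrary: j)
  case Nil then show ?case by simp
next
  case (Cons x a)
  show ?case
  proof (cases j)
    case 0 then show ?thesis by (simp add: Aof_def)
  next
    case (Suc j1)
    show ?thesis
    proof (cases j1)
      case 0 then show ?thesis using Suc by (simp add: Aof_def)
    next
      case (Suc j2)
      have "Aof (x # a) ! j = Aof a ! j2" using \<open>j = Suc j1\<close> Suc by (simp add: Aof_def)
      also have "\<dots> = a ! (j2 div 2)" using Cons.IH[of j2] Cons.prems \<open>j = Suc j1\<close> Suc by simp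
      finally show ?thesis using \<open>j = Suc j1\<close> Suc by simp
    qed
  qed
qed

lemma nth_Bof: "j < 2 * length b \<Longrightarrow> Bof b ! j = (if even j then b ! (j div 2) else \<not> b ! (j div 2))"
proof (induction b arbitrary: j)
  case Nil then show ?case by simp
next
  case (Cons x b)
  show ?case
  proof (cases j)
    case 0 then show ?thesis by (simp add: Bof_def)
  next
    case (Suc j1)
    show ?thesis
    proof (cases j1)
      case 0 then show ?thesis using Suc by (simp add: Bof_def)
    next
      case (Suc j2)
      have "Bof (x # b) ! j = Bof b ! j2" using \<open>j = Suc j1\<close> Suc by (simp add: Bof_def)
      also have "\<dots> = (if even j2 then b ! (j2 div 2) else \<not> b ! (j2 div 2))"
        using Cons.IH[of j2] Cons.prems \<open>j = Suc j1\<close> Suc by simp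
      finally show ?thesis using \<open>j = Suc j1\<close> Suc by simp
    qed
  qed
qed

lemma length_xor[simp]: "length (xor_str A B) = min (length A) (length B)"
  by (simp add: xor_str_def)

lemma nth_xor: "j < length A \<Longrightarrow> j < length B \<Longrightarrow> xor_str A B ! j = (A ! j \<noteq> B ! j)"
  by (simp add: xor_str_def)

lemma xor_Cv:
  assumes "length a = k" "length b = k" "p < 2 * k"
  shows "xor_str (Aof a) (Bof b) ! p = Cv a b p"
  using assms by (auto simp: nth_xor nth_Aof nth_Bof Cv_def)

lemma xor_AB_Cons:
  "xor_str (Aof (x # a)) (Bof (y # b)) = (x \<noteq> y) # (x = y) # xor_str (Aof a) (Bof b)"
  by (auto simp: xor_str_def Aof_def Bof_def)

lemma balanced_AB:
  "length a = length b \<Longrightarrow> balanced (xor_str (Aof a) (Bof b))"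
proof (induction a arbitrary: b)
  case Nil then show ?case by (simp add: balanced_def xor_str_def Aof_def)
next
  case (Cons x a)
  then obtain y b' where b: "b = y # b'" "length a = length b'" by (cases b) auto
  show ?case using Cons.IH[OF b(2)] unfolding b(1) xor_AB_Cons by (auto simp: balanced_def)
qed

lemma hN_in:
  assumes "length a = k" "length b = k" "k > 0"
  shows "hN a b \<in> H_OTP"
proof -
  have "length (Aof a) > 0" using assms by simp
  then have "Aof a \<noteq> []" by (metis length_greater_0_conv)
  moreover have "length (Aof a) = length (Bof b)" using assms by simp
  moreover have "balanced (xor_str (Aof a) (Bof b))" using assms balanced_AB[of a b] by simp
  ultimately show ?thesis unfolding H_OTP_def hN_def by blast
qed

lemma hN_val:
  assumes "length a = k" "length b = k" "p < 2 * k"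
  shows "hN a b p = (Cv a b p, if Cv a b p then Bof b else Aof a)"
  using assms xor_Cv[OF assms] by (simp add: hN_def h_AB_def)

definition pt :: "bool list \<Rightarrow> bool list \<Rightarrow> bool \<Rightarrow> nat \<Rightarrow> nat" where
  "pt a b t i = (if (a ! i \<noteq> b ! i) = t then 2 * i else 2 * i + 1)"

lemma pt_div: "pt a b t i div 2 = i" by (simp add: pt_def)
lemma pt_lt: "i < k \<Longrightarrow> pt a b t i < 2 * k" by (simp add: pt_def)
lemma Cv_pt: "Cv a b (pt a b t i) = t" by (auto simp: pt_def Cv_def)

lemma Cv_other:
  assumes "p div 2 = i" "p \<noteq> pt a b t i" shows "Cv a b p = (\<not> t)"
proof -
  have "p = 2 * i \<or> p = 2 * i + 1" using assms(1) by auto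
  then show ?thesis
  proof
    assume p: "p = 2*i"
    then have "(a!i \<noteq> b!i) \<noteq> t" using assms(2) by (auto simp: pt_def split: if_splits)
    then show ?thesis using p by (simp add: Cv_def)
  next
    assume p: "p = 2*i+1"
    then have "(a!i \<noteq> b!i) = t" using assms(2) by (auto simp: pt_def split: if_splits)
    then show ?thesis using p by (auto simp: Cv_def)
  qed
qed

lemma hN_pt:
  assumes "length a = k" "length b = k" "i < k"
  shows "hN a b (pt a b t i) = (t, if t then Bof b else Aof a)"
  using hN_val[OF assms(1,2) pt_lt[OF assms(3)]] Cv_pt by simp

lemma balanced_count:
  assumes "balanced s" "length s = 2 * k"
  shows "card {q. q < 2 * k \<and> s ! q = t} = k"
proof -
  have e: "length (filter (\<lambda>b. b) s) = length (filter (\<lambda>b. \<not> b) s)" using assms(1) by (simp add: balanced_def)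
  have "length (filter (\<lambda>b. b) s) + length (filter (\<lambda>b. \<not> b) s) = length s"
    by (rule sum_length_filter_compl)
  then have k1: "length (filter (\<lambda>b. b = t) s) = k" using e assms(2) by (cases t) auto
  show ?thesis using k1 assms(2) by (simp add: length_filter_conv_card)
qed



lemma xor_determines:
  assumes "length A = n" "length B = n" "length A2 = n" "length B2 = n"
    "xor_str A B = xor_str A2 B2" "A = A2 \<or> B = B2"
  shows "A = A2 \<and> B = B2"
proof -
  have x: "(A ! q \<noteq> B ! q) = (A2 ! q \<noteq> B2 ! q)" if "q < n" for q
    using assms(5) nth_xor[of q A B] nth_xor[of q A2 B2] that assms(1-4) by simp
  show ?thesis
  proof (cases "A = A2")
    case True
    have "B = B2" by (rule nth_equalityI) (use assms x True in auto)
    then show ?thesis using True by simp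
  next
    case False
    then have B: "B = B2" using assms(6) by simp
    have "A = A2" by (rule nth_equalityI) (use assms x B in auto)
    then show ?thesis using B by simp
  qed
qed

lemma unique_hN:
  assumes la: "length a = k" and lb: "length b = k" and k: "k > 0" and h: "h \<in> H_OTP"
    and agree: "\<forall>j<k. h (pt a b t j) = hN a b (pt a b t j)"
  shows "h = hN a b"
proof -
  obtain A' B' where hAB: "h = h_AB A' B'" and lAB: "length A' = length B'" and ne: "A' \<noteq> []"
    and bal: "balanced (xor_str A' B')" using h by (rule H_OTP_E)
  define L where "L = (if t then Bof b else Aof a)"
  have hj: "h_AB A' B' (pt a b t j) = (t, L)" if "j < k" for j
    using agree that hN_pt[OF la lb that, of t] hAB L_def by simp
  have "h_AB A' B' (pt a b t 0) = (t, L)" using hj k by simp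
  then have tl: "(if t then B' else A') = L" by (auto simp: h_AB_def split: if_splits)
  have lA: "length A' = 2 * k"
    using tl lAB la lb by (cases t) (auto simp: L_def)
  define s where "s = xor_str A' B'"
  have ls: "length s = 2 * k" using lA lAB by (simp add: s_def)
  have sj: "s ! (pt a b t j) = t" if "j < k" for j
  proof -
    have "pt a b t j mod length A' = pt a b t j" using pt_lt[OF that] lA by simp
    then show ?thesis using hj[OF that] by (auto simp: h_AB_def s_def split: if_splits)
  qed
  define P where "P = pt a b t ` {..<k}"
  define Q where "Q = {q. q < 2 * k \<and> s ! q = t}"
  have inj: "inj_on (pt a b t) {..<k}"
    by (rule inj_onI) (metis pt_div)
  have cP: "card P = k" using card_image[OF inj] by (simp add: P_def)
  have cQ: "card Q = k" using balanced_count[OF bal[folded s_def] ls] by (simp add: Q_def)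
  have PQ: "P \<subseteq> Q" using sj pt_lt by (auto simp: P_def Q_def)
  have "finite Q" by (simp add: Q_def)
  then have PeQ: "P = Q" using card_subset_eq[OF _ PQ] cP cQ by simp
  have s0: "s = xor_str (Aof a) (Bof b)"
  proof (rule nth_equalityI)
    show "length s = length (xor_str (Aof a) (Bof b))" using ls la lb by simp
  next
    fix q assume "q < length s"
    then have q: "q < 2 * k" using ls by simp
    have r: "xor_str (Aof a) (Bof b) ! q = Cv a b q" by (rule xor_Cv[OF la lb q])
    show "s ! q = xor_str (Aof a) (Bof b) ! q"
    proof (cases "q \<in> P")
      case True
      then obtain j where j: "j < k" "q = pt a b t j" by (auto simp: P_def)
      then show ?thesis using r sj Cv_pt by simp
    next
      case False
      then have "q \<notin> Q" using PeQ by simp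
      then have sq: "s ! q = (\<not> t)" using q by (auto simp: Q_def)
      have "q div 2 < k" using q by simp
      then have "q \<noteq> pt a b t (q div 2)" using False by (auto simp: P_def)
      then have "Cv a b q = (\<not> t)" using Cv_other by simp
      then show ?thesis using r sq by simp
    qed
  qed
  have "A' = Aof a \<and> B' = Bof b"
    by (rule xor_determines[where n = "2 * k"]) (use lA lAB la lb s0 s_def tl L_def in \<open>auto split: if_splits\<close>)
  then show ?thesis using hAB by (simp add: hN_def)
qed

definition nbr :: "bool \<Rightarrow> nat \<Rightarrow> bool list \<Rightarrow> bool list \<Rightarrow> bool list \<times> bool list" where
  "nbr t i a b = (if t then (a[i := \<not> a ! i], b) else (a, b[i := \<not> b ! i]))"

definition hP :: "bool list \<times> bool list \<Rightarrow> nat \<Rightarrow> bool \<times> bool list" where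
  "hP N = hN (fst N) (snd N)"

lemma nbr_len: "length (fst (nbr t i a b)) = length a" "length (snd (nbr t i a b)) = length b"
  by (auto simp: nbr_def)

lemma Cv_nbr_same: "p div 2 \<noteq> i \<Longrightarrow> Cv (fst (nbr t i a b)) (snd (nbr t i a b)) p = Cv a b p"
  by (auto simp: nbr_def Cv_def)

lemma Cv_nbr_i: "p div 2 = i \<Longrightarrow> i < length a \<Longrightarrow> i < length b \<Longrightarrow>
    Cv (fst (nbr t i a b)) (snd (nbr t i a b)) p = (\<not> Cv a b p)"
  by (auto simp: nbr_def Cv_def)

lemma nbr_agree:
  assumes la: "length a = k" and lb: "length b = k" and j: "j < k" "j \<noteq> i"
  shows "hP (nbr t i a b) (pt a b t j) = hN a b (pt a b t j)"
proof -
  let ?a = "fst (nbr t i a b)" and ?b = "snd (nbr t i a b)"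
  have l: "length ?a = k" "length ?b = k" using nbr_len la lb by auto
  have c: "Cv ?a ?b (pt a b t j) = t" using Cv_nbr_same[of "pt a b t j" i t a b] pt_div j Cv_pt by simp
  have "hP (nbr t i a b) (pt a b t j) = (t, if t then Bof ?b else Aof ?a)"
    using hN_val[OF l pt_lt[OF j(1)]] c by (simp add: hP_def)
  also have "\<dots> = (t, if t then Bof b else Aof a)" by (auto simp: nbr_def)
  also have "\<dots> = hN a b (pt a b t j)" using hN_pt[OF la lb j(1)] by simp
  finally show ?thesis .
qed

lemma nbr_flip:
  assumes la: "length a = k" and lb: "length b = k" and i: "i < k"
  shows "fst (hP (nbr t i a b) (pt a b t i)) = (\<not> t)"
proof -
  let ?a = "fst (nbr t i a b)" and ?b = "snd (nbr t i a b)"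
  have l: "length ?a = k" "length ?b = k" using nbr_len la lb by auto
  have "Cv ?a ?b (pt a b t i) = (\<not> t)" using Cv_nbr_i[of "pt a b t i" i a b t] pt_div i la lb Cv_pt by simp
  then show ?thesis using hN_val[OF l pt_lt[OF i]] by (simp add: hP_def)
qed

lemma nbr_in: "length a = k \<Longrightarrow> length b = k \<Longrightarrow> k > 0 \<Longrightarrow> hP (nbr t i a b) \<in> H_OTP"
  unfolding hP_def by (rule hN_in) (auto simp: nbr_len)

lemma emp_risk_0: "emp_risk S g = 0 \<longleftrightarrow> (\<forall>p\<in>set S. g (fst p) = snd p)"
proof (cases "S = []")
  case True then show ?thesis by (simp add: emp_risk_def)
next
  case False
  then have n: "real (length S) > 0" by simp
  have "emp_risk S g = 0 \<longleftrightarrow> (\<Sum>i<length S. if g (fst (S ! i)) \<noteq> snd (S ! i) then 1 else 0 :: real) = 0"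
    using n by (simp add: emp_risk_def)
  also have "\<dots> \<longleftrightarrow> (\<forall>i<length S. g (fst (S ! i)) = snd (S ! i))"
    by (subst sum_nonneg_eq_0_iff) auto
  also have "\<dots> \<longleftrightarrow> (\<forall>p\<in>set S. g (fst p) = snd p)"
    by (metis (no_types, lifting) in_set_conv_nth)
  finally show ?thesis .
qed

lemma set_drop_idx: "set (drop_idx xs i) = {xs ! j | j. j < length xs \<and> j \<noteq> i}"
proof
  show "{xs ! j | j. j < length xs \<and> j \<noteq> i} \<subseteq> set (drop_idx xs i)"
    using in_drop_idx by blast
next
  show "set (drop_idx xs i) \<subseteq> {xs ! j | j. j < length xs \<and> j \<noteq> i}"
  proof
    fix q assume "q \<in> set (drop_idx xs i)"
    then have "q \<in> set (take i xs) \<or> q \<in> set (drop (Suc i) xs)" by (simp add: drop_idx_def)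
    then show "q \<in> {xs ! j | j. j < length xs \<and> j \<noteq> i}"
    proof
      assume "q \<in> set (take i xs)"
      then obtain j where "j < length (take i xs)" "take i xs ! j = q" by (auto simp: in_set_conv_nth)
      then show ?thesis by auto
    next
      assume "q \<in> set (drop (Suc i) xs)"
      then obtain j where "j < length (drop (Suc i) xs)" "drop (Suc i) xs ! j = q" by (auto simp: in_set_conv_nth)
      then show ?thesis by (intro CollectI exI[of _ "Suc i + j"]) auto
    qed
  qed
qed

definition Lpsi :: "((nat \<Rightarrow> bool \<times> bool list) \<Rightarrow> nat \<Rightarrow> real) \<Rightarrow> (nat, bool \<times> bool list) learner" where
  "Lpsi \<psi> S x = (let R = reg_argmin H_OTP \<psi> S x in
     if R = {} then (True, [])
     else if (\<exists>g\<in>R. fst (g x) \<noteq> fst (snd (hd S)))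
       then (SOME v. \<exists>g\<in>R. v = g x \<and> fst (g x) \<noteq> fst (snd (hd S)))
       else (SOME v. \<exists>g\<in>R. v = g x))"

lemma Lpsi_induced: "induced_by H_OTP \<psi> (Lpsi \<psi>)"
  unfolding induced_by_def
proof (intro allI impI)
  fix S x assume ne: "reg_argmin H_OTP \<psi> S x \<noteq> {}"
  let ?R = "reg_argmin H_OTP \<psi> S x"
  show "Lpsi \<psi> S x \<in> (\<lambda>h. h x) ` ?R"
  proof (cases "\<exists>g\<in>?R. fst (g x) \<noteq> fst (snd (hd S))")
    case True
    then have "\<exists>v. \<exists>g\<in>?R. v = g x \<and> fst (g x) \<noteq> fst (snd (hd S))" by blast
    from someI_ex[OF this] show ?thesis using ne True by (auto simp: Lpsi_def Let_def)
  next
    case False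
    have "\<exists>v. \<exists>g\<in>?R. v = g x" using ne by blast
    from someI_ex[OF this] show ?thesis using ne False by (auto simp: Lpsi_def Let_def)
  qed
qed



lemma err_lemma:
  assumes la: "length a = k" and lb: "length b = k" and k2: "k \<ge> 2" and i: "i < k"
    and le: "\<psi> (hP (nbr t i a b)) (pt a b t i) \<le> \<psi> (hN a b) (pt a b t i)"
  shows "Lpsi \<psi> (map (\<lambda>x. (x, hN a b x)) (drop_idx (map (pt a b t) [0..<k]) i)) (pt a b t i)
           \<noteq> hN a b (pt a b t i)"
proof
  define S' where "S' = map (\<lambda>x. (x, hN a b x)) (drop_idx (map (pt a b t) [0..<k]) i)"
  define x where "x = pt a b t i"
  define R where "R = reg_argmin H_OTP \<psi> S' x"
  define L where "L = (if t then Bof b else Aof a)"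
  assume eq: "Lpsi \<psi> (map (\<lambda>x. (x, hN a b x)) (drop_idx (map (pt a b t) [0..<k]) i)) (pt a b t i)
           = hN a b (pt a b t i)"
  then have eq': "Lpsi \<psi> S' x = (t, L)" using hN_pt[OF la lb i] by (simp add: S'_def x_def L_def)
  have k0: "k > 0" using k2 by simp
  have setS': "set S' = {(pt a b t j, hN a b (pt a b t j)) | j. j < k \<and> j \<noteq> i}"
  proof -
    have "{map (pt a b t) [0..<k] ! j |j. j < length (map (pt a b t) [0..<k]) \<and> j \<noteq> i}
        = {pt a b t j |j. j < k \<and> j \<noteq> i}"
    proof (intro equalityI subsetI)
      fix q assume "q \<in> {pt a b t j |j. j < k \<and> j \<noteq> i}"
      then obtain j where "q = pt a b t j" "j < k" "j \<noteq> i" by blast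
      then show "q \<in> {map (pt a b t) [0..<k] ! j |j. j < length (map (pt a b t) [0..<k]) \<and> j \<noteq> i}"
        by (intro CollectI exI[of _ j]) simp
    next
      fix q assume "q \<in> {map (pt a b t) [0..<k] ! j |j. j < length (map (pt a b t) [0..<k]) \<and> j \<noteq> i}"
      then obtain j where "q = map (pt a b t) [0..<k] ! j" "j < k" "j \<noteq> i" by auto
      then show "q \<in> {pt a b t j |j. j < k \<and> j \<noteq> i}" by auto
    qed
    then have "set S' = (\<lambda>x. (x, hN a b x)) ` {pt a b t j |j. j < k \<and> j \<noteq> i}"
      unfolding S'_def set_map set_drop_idx by simp
    then show ?thesis by auto
  qed
  have cons: "emp_risk S' g = 0 \<longleftrightarrow> (\<forall>j<k. j \<noteq> i \<longrightarrow> g (pt a b t j) = hN a b (pt a b t j))" for g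
  proof -
    have "(\<forall>p\<in>set S'. g (fst p) = snd p) \<longleftrightarrow> (\<forall>j<k. j \<noteq> i \<longrightarrow> g (pt a b t j) = hN a b (pt a b t j))"
    proof
      assume H: "\<forall>p\<in>set S'. g (fst p) = snd p"
      show "\<forall>j<k. j \<noteq> i \<longrightarrow> g (pt a b t j) = hN a b (pt a b t j)"
      proof (intro allI impI)
        fix j assume "j < k" "j \<noteq> i"
        then have "(pt a b t j, hN a b (pt a b t j)) \<in> set S'" using setS' by blast
        then show "g (pt a b t j) = hN a b (pt a b t j)" using H by fastforce
      qed
    qed (auto simp: setS')
    then show ?thesis by (simp add: emp_risk_0)
  qed
  define j0 where "j0 = (if i = 0 then 1 else (0::nat))"
  have j0: "j0 < k" "j0 \<noteq> i" using k2 i by (auto simp: j0_def)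
  have "(pt a b t j0, hN a b (pt a b t j0)) \<in> set S'" using setS' j0 by blast
  then have "S' \<noteq> []" by auto
  then have "hd S' \<in> set S'" by simp
  then obtain jh where jh: "hd S' = (pt a b t jh, hN a b (pt a b t jh))" "jh < k"
    unfolding setS' by blast
  then have hdt: "fst (snd (hd S')) = t" using hN_pt[OF la lb jh(2)] by simp
  have "length L = 2 * k" using la lb by (simp add: L_def)
  then have Lne: "L \<noteq> []" using k0 by auto
  show False
  proof (cases "R = {}")
    case True
    then have "Lpsi \<psi> S' x = (True, [])" by (simp add: Lpsi_def R_def)
    then show False using eq' Lne by simp
  next
    case Rne: False
    show False
    proof (cases "\<exists>g\<in>R. fst (g x) \<noteq> t")
      case True
      then have ex: "\<exists>v. \<exists>g\<in>R. v = g x \<and> fst (g x) \<noteq> fst (snd (hd S'))" using hdt by blast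
      have "Lpsi \<psi> S' x = (SOME v. \<exists>g\<in>R. v = g x \<and> fst (g x) \<noteq> fst (snd (hd S')))"
        using Rne True hdt by (simp add: Lpsi_def R_def Let_def)
      with someI_ex[OF ex] have "fst (Lpsi \<psi> S' x) \<noteq> t" using hdt by auto
      then show False using eq' by simp
    next
      case False
      then have allt: "\<forall>g\<in>R. fst (g x) = t" by blast
      obtain m where m: "m \<in> R" using Rne by blast
      then have mH: "m \<in> H_OTP" and mc: "emp_risk S' m = 0"
        and mmin: "\<forall>h'\<in>H_OTP. emp_risk S' h' = 0 \<longrightarrow> \<psi> m x \<le> \<psi> h' x"
        by (auto simp: R_def reg_argmin_def)
      have mj: "\<forall>j<k. j \<noteq> i \<longrightarrow> m (pt a b t j) = hN a b (pt a b t j)" using mc cons by blast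
      have "fst (m x) = t" using allt m by blast
      moreover have "m (pt a b t j0) = (t, L)" using mj j0 hN_pt[OF la lb j0(1)] by (simp add: L_def)
      ultimately have "m x = m (pt a b t j0)" using H_same_fst[OF mH, of x "pt a b t j0"] by simp
      then have "m x = hN a b x" using \<open>m (pt a b t j0) = (t, L)\<close> hN_pt[OF la lb i] by (simp add: x_def L_def)
      then have "\<forall>j<k. m (pt a b t j) = hN a b (pt a b t j)" using mj by (metis x_def)
      then have mN: "m = hN a b" by (rule unique_hN[OF la lb k0 mH])
      have nH: "hP (nbr t i a b) \<in> H_OTP" by (rule nbr_in[OF la lb k0])
      have nc: "emp_risk S' (hP (nbr t i a b)) = 0" using cons nbr_agree[OF la lb] by blast
      have "\<forall>h'\<in>H_OTP. emp_risk S' h' = 0 \<longrightarrow> \<psi> (hP (nbr t i a b)) x \<le> \<psi> h' x"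
        using mmin mN le x_def by force
      then have "hP (nbr t i a b) \<in> R" using nH nc by (simp add: R_def reg_argmin_def)
      then have "fst (hP (nbr t i a b) x) = t" using allt by blast
      then show False using nbr_flip[OF la lb i] x_def by simp
    qed
  qed
qed



definition sig :: "nat \<Rightarrow> bool list \<times> bool list \<Rightarrow> bool list \<times> bool list" where
  "sig i N = nbr (fst N ! i \<noteq> snd N ! i) i (fst N) (snd N)"

definition FF :: "nat \<Rightarrow> (bool list \<times> bool list) set" where
  "FF k = {N. length (fst N) = k \<and> length (snd N) = k}"

lemma sig_F: "N \<in> FF k \<Longrightarrow> sig i N \<in> FF k"
  by (simp add: FF_def sig_def nbr_len)

lemma sig4: assumes "N \<in> FF k" "i < k" shows "sig i (sig i (sig i (sig i N))) = N"
proof -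
  obtain a b where N: "N = (a, b)" by (cases N)
  have l: "i < length a" "i < length b" using assms N by (auto simp: FF_def)
  show ?thesis using l unfolding N
    by (cases "a ! i"; cases "b ! i") (simp_all add: sig_def nbr_def list_update_same_conv)
qed

lemma sig_bij: assumes "i < k" shows "bij_betw (sig i) (FF k) (FF k)"
proof (rule bij_betw_byWitness[where f' = "\<lambda>N. sig i (sig i (sig i N))"])
  show "\<forall>N\<in>FF k. sig i (sig i (sig i (sig i N))) = N" using sig4[OF _ assms] by blast
  show "\<forall>N\<in>FF k. sig i (sig i (sig i (sig i N))) = N" using sig4[OF _ assms] by blast
  show "sig i ` FF k \<subseteq> FF k" using sig_F by blast
  show "(\<lambda>N. sig i (sig i (sig i N))) ` FF k \<subseteq> FF k" using sig_F by blast
qed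

lemma FF_finite: "finite (FF k)"
proof -
  have "FF k \<subseteq> {xs :: bool list. length xs = k} \<times> {xs. length xs = k}" by (auto simp: FF_def)
  moreover have "finite {xs :: bool list. set xs \<subseteq> UNIV \<and> length xs = k}"
    by (rule finite_lists_length_eq) simp
  then have "finite {xs :: bool list. length xs = k}" by simp
  then have "finite ({xs :: bool list. length xs = k} \<times> {xs :: bool list. length xs = k})"
    by (intro finite_cartesian_product)
  ultimately show ?thesis by (rule finite_subset)
qed

lemma FF_ne: "(replicate k False, replicate k False) \<in> FF k" by (simp add: FF_def)

lemma sum_sig: assumes "i < k" shows "(\<Sum>N\<in>FF k. f (sig i N)) = (\<Sum>N\<in>FF k. (f N :: real))"
  by (rule sum.reindex_bij_betw[OF sig_bij[OF assms]])

definition gg :: "((nat \<Rightarrow> bool \<times> bool list) \<Rightarrow> nat \<Rightarrow> real) \<Rightarrow> nat \<Rightarrow> bool list \<times> bool list \<Rightarrow> real" where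
  "gg \<psi> i N = (if \<psi> (hP (sig i N)) (2 * i) \<le> \<psi> (hP N) (2 * i) then 1 else 0)"

lemma cycle:
  assumes "N \<in> FF k" "i < k"
  shows "gg \<psi> i N + gg \<psi> i (sig i N) + gg \<psi> i (sig i (sig i N)) + gg \<psi> i (sig i (sig i (sig i N))) \<ge> 1"
proof (rule ccontr)
  assume "\<not> ?thesis"
  then have "\<psi> (hP N) (2*i) < \<psi> (hP (sig i N)) (2*i)"
    "\<psi> (hP (sig i N)) (2*i) < \<psi> (hP (sig i (sig i N))) (2*i)"
    "\<psi> (hP (sig i (sig i N))) (2*i) < \<psi> (hP (sig i (sig i (sig i N)))) (2*i)"
    "\<psi> (hP (sig i (sig i (sig i N)))) (2*i) < \<psi> (hP (sig i (sig i (sig i (sig i N))))) (2*i)"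
    by (auto simp: gg_def split: if_splits)
  then show False using sig4[OF assms] by simp
qed

lemma sum_gg: assumes "i < k" shows "4 * (\<Sum>N\<in>FF k. gg \<psi> i N) \<ge> real (card (FF k))"
proof -
  have "real (card (FF k)) = (\<Sum>N\<in>FF k. 1)" by simp
  also have "\<dots> \<le> (\<Sum>N\<in>FF k. gg \<psi> i N + gg \<psi> i (sig i N) + gg \<psi> i (sig i (sig i N)) + gg \<psi> i (sig i (sig i (sig i N))))"
    by (rule sum_mono) (rule cycle[OF _ assms])
  also have "\<dots> = (\<Sum>N\<in>FF k. gg \<psi> i N) + (\<Sum>N\<in>FF k. gg \<psi> i (sig i N)) + (\<Sum>N\<in>FF k. gg \<psi> i (sig i (sig i N))) + (\<Sum>N\<in>FF k. gg \<psi> i (sig i (sig i (sig i N))))"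
    by (simp add: sum.distrib)
  also have "(\<Sum>N\<in>FF k. gg \<psi> i (sig i N)) = (\<Sum>N\<in>FF k. gg \<psi> i N)"
    by (rule sum_sig[OF assms])
  also have "(\<Sum>N\<in>FF k. gg \<psi> i (sig i (sig i N))) = (\<Sum>N\<in>FF k. gg \<psi> i N)"
    using sum_sig[OF assms, of "\<lambda>N. gg \<psi> i (sig i N)"] sum_sig[OF assms, of "gg \<psi> i"] by simp
  also have "(\<Sum>N\<in>FF k. gg \<psi> i (sig i (sig i (sig i N)))) = (\<Sum>N\<in>FF k. gg \<psi> i N)"
    using sum_sig[OF assms, of "\<lambda>N. gg \<psi> i (sig i (sig i N))"] sum_sig[OF assms, of "\<lambda>N. gg \<psi> i (sig i N)"]
      sum_sig[OF assms, of "gg \<psi> i"] by simp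
  finally show ?thesis by simp
qed

lemma exists_N: assumes "k > 0" shows "\<exists>N\<in>FF k. 4 * (\<Sum>i<k. gg \<psi> i N) \<ge> real k"
proof (rule ccontr)
  assume "\<not> ?thesis"
  then have lt: "\<forall>N\<in>FF k. 4 * (\<Sum>i<k. gg \<psi> i N) < real k" by auto
  have "(\<Sum>N\<in>FF k. 4 * (\<Sum>i<k. gg \<psi> i N)) < (\<Sum>N\<in>FF k. real k)"
    by (rule sum_strict_mono[OF FF_finite]) (use FF_ne lt in auto)
  also have "\<dots> = (\<Sum>i<k. real (card (FF k)))" by simp
  also have "\<dots> \<le> (\<Sum>i<k. 4 * (\<Sum>N\<in>FF k. gg \<psi> i N))"
    by (rule sum_mono) (rule sum_gg, simp)
  also have "\<dots> = (\<Sum>N\<in>FF k. 4 * (\<Sum>i<k. gg \<psi> i N))"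
    by (simp add: sum_distrib_left sum.swap[of _ "{..<k}"])
  finally show False by simp
qed

definition EE :: "((nat \<Rightarrow> bool \<times> bool list) \<Rightarrow> nat \<Rightarrow> real) \<Rightarrow> nat \<Rightarrow> bool list \<Rightarrow> bool list \<Rightarrow> bool \<Rightarrow> nat \<Rightarrow> real" where
  "EE \<psi> k a b t i = (if Lpsi \<psi> (map (\<lambda>x. (x, hN a b x)) (drop_idx (map (pt a b t) [0..<k]) i)) (map (pt a b t) [0..<k] ! i)
        \<noteq> hN a b (map (pt a b t) [0..<k] ! i) then 1 else 0)"

lemma gg_le_EE:
  assumes la: "length a = k" and lb: "length b = k" and k2: "k \<ge> 2" and i: "i < k"
  shows "gg \<psi> i (a, b) \<le> EE \<psi> k a b True i + EE \<psi> k a b False i"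
proof (cases "gg \<psi> i (a, b) = 0")
  case True
  then show ?thesis by (simp add: EE_def)
next
  case False
  define t where "t = (a ! i \<noteq> b ! i)"
  have p: "pt a b t i = 2 * i" by (simp add: pt_def t_def)
  have s: "sig i (a, b) = nbr t i a b" by (simp add: sig_def t_def)
  have "\<psi> (hP (nbr t i a b)) (pt a b t i) \<le> \<psi> (hN a b) (pt a b t i)"
    using False p s by (auto simp: gg_def hP_def split: if_splits)
  then have "Lpsi \<psi> (map (\<lambda>x. (x, hN a b x)) (drop_idx (map (pt a b t) [0..<k]) i)) (pt a b t i)
           \<noteq> hN a b (pt a b t i)" using err_lemma[OF la lb k2 i, where \<psi> = \<psi> and t = t] by blast
  then have "EE \<psi> k a b t i = 1" using i by (simp add: EE_def)
  moreover have "gg \<psi> i (a, b) \<le> 1" by (simp add: gg_def)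
  moreover have "EE \<psi> k a b s i \<ge> 0" for s by (simp add: EE_def)
  ultimately show ?thesis by (cases t) (auto simp: add_increasing add_increasing2)
qed

lemma bad_instance:
  assumes k2: "k \<ge> 2"
  shows "\<exists>a b t. length a = k \<and> length b = k \<and>
           trans_error (Lpsi \<psi>) (map (pt a b t) [0..<k]) (hN a b) \<ge> 1 / 8"
proof -
  obtain N where N: "N \<in> FF k" and NN: "4 * (\<Sum>i<k. gg \<psi> i N) \<ge> real k" using exists_N[of k \<psi>] k2 by auto
  obtain a b where ab: "N = (a, b)" by (cases N)
  have la: "length a = k" and lb: "length b = k" using N ab by (auto simp: FF_def)
  have "(\<Sum>i<k. gg \<psi> i N) \<le> (\<Sum>i<k. EE \<psi> k a b True i + EE \<psi> k a b False i)"
    by (rule sum_mono) (use gg_le_EE[OF la lb k2] ab in auto)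
  also have "\<dots> = (\<Sum>i<k. EE \<psi> k a b True i) + (\<Sum>i<k. EE \<psi> k a b False i)" by (simp add: sum.distrib)
  finally have sum: "real k / 4 \<le> (\<Sum>i<k. EE \<psi> k a b True i) + (\<Sum>i<k. EE \<psi> k a b False i)" using NN by linarith
  have "\<exists>t. (\<Sum>i<k. EE \<psi> k a b t i) \<ge> real k / 8"
  proof (cases "(\<Sum>i<k. EE \<psi> k a b True i) \<ge> real k / 8")
    case True then show ?thesis by blast
  next
    case False
    then have "(\<Sum>i<k. EE \<psi> k a b False i) \<ge> real k / 8" using sum by linarith
    then show ?thesis by blast
  qed
  then obtain t where t: "(\<Sum>i<k. EE \<psi> k a b t i) \<ge> real k / 8" by blast
  have "trans_error (Lpsi \<psi>) (map (pt a b t) [0..<k]) (hN a b) = (\<Sum>i<k. EE \<psi> k a b t i) / real k"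
    by (simp add: trans_error_def EE_def)
  also have "\<dots> \<ge> 1 / 8" using t k2 by (simp add: field_simps)
  finally show ?thesis using la lb by blast
qed

lemma part3: "\<not> (\<exists>\<psi>. local_regularizer H_OTP \<psi> \<and> reg_transductively_learns H_OTP \<psi>)"
proof
  assume "\<exists>\<psi>. local_regularizer H_OTP \<psi> \<and> reg_transductively_learns H_OTP \<psi>"
  then obtain \<psi> where "reg_transductively_learns H_OTP \<psi>" by blast
  then have "transductive_learner H_OTP (Lpsi \<psi>)"
    using Lpsi_induced by (auto simp: reg_transductively_learns_def)
  then obtain m :: "real \<Rightarrow> nat" where m: "\<forall>\<epsilon>. 0 < \<epsilon> \<and> \<epsilon> < 1 \<longrightarrow>
        (\<forall>h\<in>H_OTP. \<forall>S. length S \<ge> m \<epsilon> \<longrightarrow> trans_error (Lpsi \<psi>) S h \<le> \<epsilon>)"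
    by (auto simp: transductive_learner_def)
  define k where "k = max (m (1/10)) 2"
  have k2: "k \<ge> 2" by (simp add: k_def)
  obtain a b t where ab: "length a = k" "length b = k"
    and te: "trans_error (Lpsi \<psi>) (map (pt a b t) [0..<k]) (hN a b) \<ge> 1 / 8"
    using bad_instance[OF k2] by blast
  have "hN a b \<in> H_OTP" by (rule hN_in[OF ab]) (use k2 in simp)
  moreover have "length (map (pt a b t) [0..<k]) \<ge> m (1/10)" by (simp add: k_def)
  ultimately have "trans_error (Lpsi \<psi>) (map (pt a b t) [0..<k]) (hN a b) \<le> 1/10"
    using m[rule_format, of "1/10" "hN a b" "map (pt a b t) [0..<k]"] by simp
  then show False using te by simp
qed



theorem theorem1:
  shows "transductively_learnable H_OTP \<and> PAC_learnable H_OTP \<and>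
         \<not> (\<exists>\<psi>. local_regularizer H_OTP \<psi> \<and> reg_transductively_learns H_OTP \<psi>)"
  using part1 part2 part3 by blast

end
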